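(* For every $i\in\mathbb{N}$, the family $\{\mathrm{bit}_i:\mathbb{Z}_{2^k}\to\{-1,1\}\}_{k>i}$ is concentrated.
   Context: $\mathbb{Z}_N=\{0,\dots,N-1\}$ with addition mod $N$. $\mathrm{bit}_i:\mathbb{Z}_{2^k}\to\{-1,1\}$ is $\mathrm{bit}_i(x)=(-1)^{x_i}$ where $x=\sum_{j=0}^{k-1}x_j2^j$, $x_j\in\{0,1\}$. For $f:\mathbb{Z}_N\to\mathbb{C}$: $\langle f,g\rangle=\frac1N\sum_x f(x)\overline{g(x)}$, $\|f\|_2^2=\langle f,f\rangle$, $\chi_\alpha(x)=\exp(2\pi i\alpha x/N)$, $\widehat f(\alpha)=\langle f,\chi_\alpha\rangle$, and $f|_\Gamma=\sum_{\alpha\in\Gamma}\widehat f(\alpha)\chi_\alpha$ for $\Gamma\subseteq\mathbb{Z}_N$. A family of functions $f_k:\mathbb{Z}_{N_k}\to\mathbb{C}$ is concentrated if there is a bivariate polynomial $P\in\mathbb{R}[x,y]$ such that for every index $k$ and every $\epsilon>0$ there is $\Gamma_k\subseteq\mathbb{Z}_{N_k}$ with $|\Gamma_k|\le P(\log(N_k),1/\epsilon)$ and $\|f_k-f_k|_{\Gamma_k}\|_2^2<\epsilon$. *)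

theory Defs
  imports Complex_Main
begin

text \<open>Functions on Z_N are represented as functions nat => complex, only
  the values on {0..<N} matter.\<close>

definition zinner :: "nat \<Rightarrow> (nat \<Rightarrow> complex) \<Rightarrow> (nat \<Rightarrow> complex) \<Rightarrow> complex" where
  "zinner N f g = (1 / of_nat N) * (\<Sum>x<N. f x * cnj (g x))"

definition znorm2sq :: "nat \<Rightarrow> (nat \<Rightarrow> complex) \<Rightarrow> real" where
  "znorm2sq N f = Re (zinner N f f)"

definition zchar :: "nat \<Rightarrow> nat \<Rightarrow> nat \<Rightarrow> complex" where
  "zchar N \<alpha> x = exp (2 * of_real pi * \<i> * of_nat \<alpha> * of_nat x / of_nat N)"

definition zfourier :: "nat \<Rightarrow> (nat \<Rightarrow> complex) \<Rightarrow> nat \<Rightarrow> complex" where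
  "zfourier N f \<alpha> = zinner N f (zchar N \<alpha>)"

definition zrestrict :: "nat \<Rightarrow> (nat \<Rightarrow> complex) \<Rightarrow> nat set \<Rightarrow> nat \<Rightarrow> complex" where
  "zrestrict N f \<Gamma> = (\<lambda>x. \<Sum>\<alpha>\<in>\<Gamma>. zfourier N f \<alpha> * zchar N \<alpha> x)"

definition bitfun :: "nat \<Rightarrow> nat \<Rightarrow> complex" where
  "bitfun i x = (if bit x i then -1 else 1)"

definition bipoly :: "nat \<Rightarrow> (nat \<Rightarrow> nat \<Rightarrow> real) \<Rightarrow> real \<Rightarrow> real \<Rightarrow> real" where
  "bipoly d c x y = (\<Sum>a<d. \<Sum>b<d. c a b * x ^ a * y ^ b)"

definition concentrated :: "nat set \<Rightarrow> (nat \<Rightarrow> nat) \<Rightarrow> (nat \<Rightarrow> nat \<Rightarrow> complex) \<Rightarrow> bool" where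
  "concentrated K N f \<longleftrightarrow>
    (\<exists>d c. \<forall>k\<in>K. \<forall>\<epsilon>::real. \<epsilon> > 0 \<longrightarrow>
       (\<exists>\<Gamma>. \<Gamma> \<subseteq> {..<N k} \<and>
          real (card \<Gamma>) \<le> bipoly d c (log 2 (real (N k))) (1 / \<epsilon>) \<and>
          znorm2sq (N k) (\<lambda>x. f k x - zrestrict (N k) (f k) \<Gamma> x) < \<epsilon>))"

end

theory Submission imports Defs "HOL-Analysis.Complex_Transcendental" begin

lemma exp_int_1: "exp (2 * of_real pi * \<i> * of_int j) = 1"
  by (simp add: exp_eq_1)  

lemma root_sum:
  fixes L :: nat and m :: int
  assumes L: "L > 0"
  shows "(\<Sum>q<L. exp (2 * of_real pi * \<i> * of_int m * of_nat q / of_nat L)) =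
         (if int L dvd m then of_nat L else 0)"
proof -
  define z where "z = exp (2 * of_real pi * \<i> * of_int m / of_nat L)"
  have pw: "exp (2 * of_real pi * \<i> * of_int m * of_nat q / of_nat L) = z ^ q" for q
    unfolding z_def by (subst exp_of_nat_mult[symmetric]) (simp add: algebra_simps)
  have zL: "z ^ L = 1"
  proof -
    have "z ^ L = exp (of_nat L * (2 * of_real pi * \<i> * of_int m / of_nat L))"
      unfolding z_def by (rule exp_of_nat_mult[symmetric])
    also have "\<dots> = exp (2 * of_real pi * \<i> * of_int m)" using L by simp
    also have "\<dots> = 1" by (rule exp_int_1)
    finally show ?thesis .
  qed
  show ?thesis
  proof (cases "int L dvd m")
    case True
    then obtain j where j: "m = int L * j" by blast
    have "z = 1" unfolding z_def j using L by (simp add: exp_eq_1)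
    then show ?thesis using True by (simp add: pw)
  next
    case False
    have "z \<noteq> 1"
    proof
      assume "z = 1"
      then obtain n :: int where n: "2 * pi * of_int m / of_nat L = of_int (2*n) * pi"
        unfolding z_def exp_eq_1 by auto
      hence "real_of_int m = of_int n * of_nat L" using L by (simp add: field_simps)
      hence "m = n * int L" by (metis of_int_eq_iff of_int_mult of_int_of_nat_eq)
      with False show False by simp
    qed
    then show ?thesis using False by (simp add: pw sum_gp_strict zL)
  qed
qed
lemma cnj_zchar_mult:
  "cnj (zchar N \<alpha> y) * zchar N \<alpha> x =
   exp (2 * of_real pi * \<i> * of_int (int x - int y) * of_nat \<alpha> / of_nat N)"
proof -
  have "cnj (zchar N \<alpha> y) = exp (- (2 * of_real pi * \<i> * of_nat \<alpha> * of_nat y / of_nat N))"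
    unfolding zchar_def exp_cnj by simp
  hence "cnj (zchar N \<alpha> y) * zchar N \<alpha> x =
     exp (- (2 * of_real pi * \<i> * of_nat \<alpha> * of_nat y / of_nat N) +
          2 * of_real pi * \<i> * of_nat \<alpha> * of_nat x / of_nat N)"
    unfolding zchar_def by (simp only: exp_add)
  also have "\<dots> = exp (2 * of_real pi * \<i> * of_int (int x - int y) * of_nat \<alpha> / of_nat N)"
    by (rule arg_cong[where f=exp]) (simp add: algebra_simps diff_divide_distrib)
  finally show ?thesis .
qed

lemma inversion:
  assumes N: "N > 0" and x: "x < N"
  shows "(\<Sum>\<alpha><N. zfourier N f \<alpha> * zchar N \<alpha> x) = f x"
proof -
  define E where "E y \<alpha> = exp (2 * of_real pi * \<i> * of_int (int x - int y) * of_nat \<alpha> / of_nat N)" for y \<alpha>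
  have "(\<Sum>\<alpha><N. zfourier N f \<alpha> * zchar N \<alpha> x) =
        (\<Sum>\<alpha><N. \<Sum>y<N. (1 / of_nat N) * (f y * E y \<alpha>))"
  proof (rule sum.cong[OF refl])
    fix \<alpha>
    show "zfourier N f \<alpha> * zchar N \<alpha> x = (\<Sum>y<N. (1 / of_nat N) * (f y * E y \<alpha>))"
      unfolding zfourier_def zinner_def E_def cnj_zchar_mult[symmetric] sum_distrib_left sum_distrib_right
      by (simp only: mult.assoc)
  qed
  also have "\<dots> = (\<Sum>y<N. \<Sum>\<alpha><N. (1 / of_nat N) * (f y * E y \<alpha>))"
    by (rule sum.swap)
  also have "\<dots> = (\<Sum>y<N. (1 / of_nat N) * (f y * (\<Sum>\<alpha><N. E y \<alpha>)))"
    by (simp only: sum_distrib_left)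
  also have "\<dots> = (\<Sum>y<N. (1 / of_nat N) * (f y * (if y = x then of_nat N else 0)))"
  proof (rule sum.cong[OF refl])
    fix y assume "y \<in> {..<N}"
    hence y: "y < N" by simp
    have dv: "int N dvd (int x - int y) \<longleftrightarrow> y = x"
    proof
      assume "int N dvd (int x - int y)"
      moreover have "\<bar>int x - int y\<bar> < int N" using x y by simp
      ultimately have "int x - int y = 0"
      proof -
        assume "int N dvd (int x - int y)" "\<bar>int x - int y\<bar> < int N"
        show ?thesis
      proof (rule ccontr)
        assume ne: "int x - int y \<noteq> 0"
        have "\<bar>int N\<bar> \<le> \<bar>int x - int y\<bar>"
          using dvd_imp_le_int[OF ne] \<open>int N dvd (int x - int y)\<close> by blast
        thus False using \<open>\<bar>int x - int y\<bar> < int N\<close> by simp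
      qed
      qed
      thus "y = x" by simp
    qed simp
    have "(\<Sum>\<alpha><N. E y \<alpha>) = (if y = x then of_nat N else 0)"
      unfolding E_def using root_sum[OF N, of "int x - int y"] dv by (simp only:)
    thus "(1 / of_nat N) * (f y * (\<Sum>\<alpha><N. E y \<alpha>)) =
          (1 / of_nat N) * (f y * (if y = x then of_nat N else 0))" by (simp only:)
  qed
  also have "\<dots> = (\<Sum>y<N. if y = x then f x else 0)"
    using N by (intro sum.cong refl) auto
  also have "\<dots> = f x" using x by simp
  finally show ?thesis .
qed

lemma sum_split_blocks:
  fixes g :: "nat \<Rightarrow> complex"
  shows "(\<Sum>y<L*M. g y) = (\<Sum>q<L. \<Sum>r<M. g (q*M + r))"
proof (induction L)
  case 0 then show ?case by simp
next
  case (Suc L)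
  have "(\<Sum>y<Suc L*M. g y) = (\<Sum>y<L*M. g y) + (\<Sum>y\<in>{L*M..<L*M+M}. g y)"
    by (simp add: lessThan_atLeast0 sum.atLeastLessThan_concat add.commute)
  also have "(\<Sum>y\<in>{L*M..<L*M+M}. g y) = (\<Sum>r<M. g (L*M + r))"
    using sum.shift_bounds_nat_ivl[of g 0 "L*M" M]
    by (simp add: lessThan_atLeast0 add.commute)
  finally show ?case using Suc by simp
qed

lemma bit_block:
  fixes q r i :: nat
  assumes "r < 2^Suc i"
  shows "bit (q * 2^Suc i + r) i = bit r i"
proof -
  have e: "q * 2^Suc i + r = r + (q * 2) * 2^i" by simp
  have "(q * 2^Suc i + r) div 2^i = r div 2^i + q * 2"
    unfolding e by simp
  thus ?thesis by (simp add: bit_iff_odd)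
qed

lemma fourier_vanish:
  assumes L: "L > 0" and nd: "\<not> L dvd \<alpha>"
  shows "zfourier (2^Suc i * L) (bitfun i) \<alpha> = 0"
proof -
  define M :: nat where "M = 2^Suc i"
  define N where "N = L * M"
  have M: "M > 0" unfolding M_def by simp
  define A where "A r = bitfun i r * exp (- (2 * of_real pi * \<i> * of_nat \<alpha> * of_nat r / of_nat N))" for r
  define B where "B q = exp (2 * of_real pi * \<i> * of_int (- int \<alpha>) * of_nat q / of_nat L)" for q
  have g: "bitfun i (q*M + r) * cnj (zchar N \<alpha> (q*M+r)) = A r * B q" if "r < M" for q r
  proof -
    have b: "bitfun i (q*M + r) = bitfun i r" unfolding bitfun_def M_def
      using bit_block[of r i q] that M_def by simp
    have "cnj (zchar N \<alpha> (q*M+r)) = exp (- (2 * of_real pi * \<i> * of_nat \<alpha> * of_nat (q*M+r) / of_nat N))"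
      unfolding zchar_def exp_cnj by simp
    also have "\<dots> = exp (- (2 * of_real pi * \<i> * of_nat \<alpha> * of_nat r / of_nat N)
        + 2 * of_real pi * \<i> * of_int (- int \<alpha>) * of_nat q / of_nat L)"
      by (rule arg_cong[where f=exp]) (use L M in \<open>simp add: N_def field_simps\<close>)
    finally have "cnj (zchar N \<alpha> (q*M+r)) = exp (- (2 * of_real pi * \<i> * of_nat \<alpha> * of_nat r / of_nat N)) * B q"
      unfolding B_def by (simp only: exp_add)
    thus ?thesis unfolding A_def b by (simp only: mult.assoc)
  qed
  have "(\<Sum>y<N. bitfun i y * cnj (zchar N \<alpha> y)) = (\<Sum>q<L. \<Sum>r<M. A r * B q)"
    using sum_split_blocks[of "\<lambda>y. bitfun i y * cnj (zchar N \<alpha> y)" L M, folded N_def] g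
    by simp
  also have "\<dots> = (\<Sum>r<M. A r) * (\<Sum>q<L. B q)"
    by (simp add: sum_product sum.swap[where A="{..<L}"] mult.commute)
  also have "(\<Sum>q<L. B q) = 0" unfolding B_def using root_sum[OF L, of "- int \<alpha>"] nd by simp
  finally show ?thesis unfolding zfourier_def zinner_def N_def M_def by (simp add: mult.commute)
qed

theorem corollary6p4:
  fixes i :: nat
  shows "concentrated {k. k > i} (\<lambda>k. 2 ^ k) (\<lambda>k. bitfun i)"
  unfolding concentrated_def
proof (rule exI[of _ 1], rule exI[of _ "\<lambda>_ _. (2::real) ^ Suc i"], intro ballI allI impI)
  fix k :: nat and \<epsilon> :: real
  assume k: "k \<in> {k. k > i}" and e: "\<epsilon> > 0"
  define L :: nat where "L = 2^(k - Suc i)"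
  define M :: nat where "M = 2^Suc i"
  have kk: "Suc i + (k - Suc i) = k" using k by simp
  have NLM: "(2::nat)^k = M * L" unfolding L_def M_def power_add[symmetric] kk ..
  have L: "L > 0" unfolding L_def by simp
  define \<Gamma> where "\<Gamma> = {\<alpha>. \<alpha> < 2^k \<and> L dvd \<alpha>}"
  have sub: "\<Gamma> \<subseteq> {..<2^k}" unfolding \<Gamma>_def by auto
  have "\<Gamma> \<subseteq> (\<lambda>j. j * L) ` {..<M}"
  proof
    fix \<alpha> assume "\<alpha> \<in> \<Gamma>"
    then obtain j where j: "\<alpha> = j * L" and lt: "\<alpha> < M * L" unfolding \<Gamma>_def NLM
      by (auto simp: mult.commute)
    hence "j < M" using L by simp
    thus "\<alpha> \<in> (\<lambda>j. j * L) ` {..<M}" using j by blast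
  qed
  hence "card \<Gamma> \<le> card ((\<lambda>j. j * L) ` {..<M})" by (intro card_mono) auto
  also have "\<dots> \<le> M" using card_image_le[of "{..<M}" "\<lambda>j. j * L"] by simp
  finally have cardle: "real (card \<Gamma>) \<le> 2 ^ Suc i" unfolding M_def
    by (metis of_nat_le_iff of_nat_numeral of_nat_power)
  have zero: "bitfun i x - zrestrict (2^k) (bitfun i) \<Gamma> x = 0" if x: "x < 2^k" for x
  proof -
    have "zrestrict (2^k) (bitfun i) \<Gamma> x = (\<Sum>\<alpha><2^k. zfourier (2^k) (bitfun i) \<alpha> * zchar (2^k) \<alpha> x)"
      unfolding zrestrict_def
    proof (rule sum.mono_neutral_left)
      show "\<forall>\<alpha>\<in>{..<2^k} - \<Gamma>. zfourier (2^k) (bitfun i) \<alpha> * zchar (2^k) \<alpha> x = 0"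
        using fourier_vanish[OF L, of _ i] unfolding \<Gamma>_def NLM M_def by auto
    qed (use sub in auto)
    also have "\<dots> = bitfun i x" by (rule inversion) (use x in auto)
    finally show ?thesis by simp
  qed
  have "znorm2sq (2^k) (\<lambda>x. bitfun i x - zrestrict (2^k) (bitfun i) \<Gamma> x) = 0"
    unfolding znorm2sq_def zinner_def using zero by simp
  moreover have "bipoly 1 (\<lambda>_ _. 2 ^ Suc i) (log 2 (real (2^k))) (1/\<epsilon>) = 2 ^ Suc i"
    unfolding bipoly_def by simp
  ultimately show "\<exists>\<Gamma>. \<Gamma> \<subseteq> {..<2 ^ k} \<and>
      real (card \<Gamma>) \<le> bipoly 1 (\<lambda>_ _. 2 ^ Suc i) (log 2 (real (2 ^ k))) (1 / \<epsilon>) \<and>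
      znorm2sq (2 ^ k) (\<lambda>x. bitfun i x - zrestrict (2 ^ k) (bitfun i) \<Gamma> x) < \<epsilon>"
    using sub cardle e by auto
qed
end
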